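(* Let $H<G$ be groups and $K$ a group. Then $\ast_{H\times K}(G\times K)$ embeds into $(\ast_H G)\times K$.
   Context: For a group $G$ and subgroup $H<G$, $\ast_H G$ denotes the amalgamated free product of countably infinitely many copies of $G$ over the common subgroup $H$ (each copy containing $H$ via the given inclusion). *)

theory Defs
  imports "HOL-Algebra.Algebra"
begin

text \<open>Amalgamated free product of countably infinitely many copies (indexed by nat)
of a group G over a subgroup H, given by the standard presentation:
words are lists of letters (i, g) with g in carrier G (letter g in the i-th copy);
the congruence is generated by the multiplication table of each copy,
the identity of each copy being trivial, and the identification of h in H
in copy i with h in copy j.\<close>

inductive amalg_rel :: "('a, 'b) monoid_scheme \<Rightarrow> 'a set \<Rightarrow> (nat \<times> 'a) list \<Rightarrow> (nat \<times> 'a) list \<Rightarrow> bool"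
  for G :: "('a, 'b) monoid_scheme" and H :: "'a set" where
  refl: "xs \<in> lists (UNIV \<times> carrier G) \<Longrightarrow> amalg_rel G H xs xs"
| sym: "amalg_rel G H xs ys \<Longrightarrow> amalg_rel G H ys xs"
| trans: "amalg_rel G H xs ys \<Longrightarrow> amalg_rel G H ys zs \<Longrightarrow> amalg_rel G H xs zs"
| append: "amalg_rel G H xs ys \<Longrightarrow> amalg_rel G H us vs \<Longrightarrow> amalg_rel G H (xs @ us) (ys @ vs)"
| mult: "g \<in> carrier G \<Longrightarrow> h \<in> carrier G \<Longrightarrow> amalg_rel G H [(i, g), (i, h)] [(i, g \<otimes>\<^bsub>G\<^esub> h)]"
| one: "amalg_rel G H [(i, \<one>\<^bsub>G\<^esub>)] []"
| amalg: "h \<in> H \<Longrightarrow> amalg_rel G H [(i, h)] [(j, h)]"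

definition amalg_class :: "('a, 'b) monoid_scheme \<Rightarrow> 'a set \<Rightarrow> (nat \<times> 'a) list \<Rightarrow> (nat \<times> 'a) list set"
  where "amalg_class G H xs = {ys. amalg_rel G H xs ys}"

definition amalg_prod :: "('a, 'b) monoid_scheme \<Rightarrow> 'a set \<Rightarrow> ((nat \<times> 'a) list set) monoid"
  where "amalg_prod G H =
    \<lparr> carrier = amalg_class G H ` lists (UNIV \<times> carrier G),
      monoid.mult = (\<lambda>A B. \<Union> {amalg_class G H (xs @ ys) | xs ys. xs \<in> A \<and> ys \<in> B}),
      monoid.one = amalg_class G H [] \<rparr>"

end

theory Submission
  imports Defs
begin

lemma rel_lists:
  assumes "monoid G" "H \<subseteq> carrier G"
  shows "amalg_rel G H xs ys \<Longrightarrow> xs \<in> lists (UNIV \<times> carrier G) \<and> ys \<in> lists (UNIV \<times> carrier G)"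
  by (induction rule: amalg_rel.induct)
     (use assms in \<open>auto simp: monoid.m_closed monoid.one_closed\<close>)

lemma class_eq:
  assumes "monoid G" "H \<subseteq> carrier G" "ys \<in> lists (UNIV \<times> carrier G)"
  shows "amalg_class G H xs = amalg_class G H ys \<longleftrightarrow> amalg_rel G H xs ys"
proof
  assume "amalg_class G H xs = amalg_class G H ys"
  moreover have "ys \<in> amalg_class G H ys" using assms(3) by (simp add: amalg_class_def amalg_rel.refl)
  ultimately show "amalg_rel G H xs ys" unfolding amalg_class_def by blast
next
  assume r: "amalg_rel G H xs ys"
  show "amalg_class G H xs = amalg_class G H ys"
    unfolding amalg_class_def using r amalg_rel.sym amalg_rel.trans by blast
qed

lemma class_mult:
  assumes "xs \<in> lists (UNIV \<times> carrier G)" "ys \<in> lists (UNIV \<times> carrier G)"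
  shows "amalg_class G H xs \<otimes>\<^bsub>amalg_prod G H\<^esub> amalg_class G H ys = amalg_class G H (xs @ ys)"
proof -
  have "amalg_class G H (xs' @ ys') = amalg_class G H (xs @ ys)"
    if "amalg_rel G H xs xs'" "amalg_rel G H ys ys'" for xs' ys'
  proof -
    have r: "amalg_rel G H (xs @ ys) (xs' @ ys')" using that amalg_rel.append by blast
    show ?thesis unfolding amalg_class_def using r amalg_rel.sym amalg_rel.trans by blast
  qed
  moreover have "xs \<in> amalg_class G H xs" "ys \<in> amalg_class G H ys"
    using assms by (auto simp: amalg_class_def amalg_rel.refl)
  ultimately show ?thesis
    unfolding amalg_prod_def apply simp
    unfolding amalg_class_def by blast
qed

definition pG :: "(nat \<times> ('a \<times> 'c)) list \<Rightarrow> (nat \<times> 'a) list" where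
  "pG = map (\<lambda>(i, x). (i, fst x))"

fun pK :: "('c, 'd) monoid_scheme \<Rightarrow> (nat \<times> ('a \<times> 'c)) list \<Rightarrow> 'c" where
  "pK K [] = \<one>\<^bsub>K\<^esub>"
| "pK K ((i, x) # w) = snd x \<otimes>\<^bsub>K\<^esub> pK K w"

definition lift :: "('c, 'd) monoid_scheme \<Rightarrow> (nat \<times> 'a) list \<Rightarrow> (nat \<times> ('a \<times> 'c)) list" where
  "lift K = map (\<lambda>(i, g). (i, (g, \<one>\<^bsub>K\<^esub>)))"

lemma pG_simps [simp]: "pG [] = []" "pG ((i, x) # w) = (i, fst x) # pG w" "pG (u @ v) = pG u @ pG v"
  by (auto simp: pG_def)

lemma lift_simps [simp]: "lift K [] = []" "lift K ((i, g) # w) = (i, (g, \<one>\<^bsub>K\<^esub>)) # lift K w"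
   "lift K (u @ v) = lift K u @ lift K v"
  by (auto simp: lift_def)

lemma pG_lists: "w \<in> lists (UNIV \<times> carrier (G \<times>\<times> K)) \<Longrightarrow> pG w \<in> lists (UNIV \<times> carrier G)"
  by (induction w) auto

lemma pK_carrier: "monoid K \<Longrightarrow> w \<in> lists (UNIV \<times> carrier (G \<times>\<times> K)) \<Longrightarrow> pK K w \<in> carrier K"
  by (induction w) (auto simp: monoid.m_closed monoid.one_closed)

lemma pK_append: "monoid K \<Longrightarrow> u \<in> lists (UNIV \<times> carrier (G \<times>\<times> K)) \<Longrightarrow> v \<in> lists (UNIV \<times> carrier (G \<times>\<times> K))
   \<Longrightarrow> pK K (u @ v) = pK K u \<otimes>\<^bsub>K\<^esub> pK K v"
  apply (induction u)
   apply (auto simp: pK_carrier monoid.l_one intro!: monoid.m_assoc[symmetric] pK_carrier[of K _ G])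
  by blast+

lemma lift_lists: "monoid K \<Longrightarrow> w \<in> lists (UNIV \<times> carrier G) \<Longrightarrow> lift K w \<in> lists (UNIV \<times> carrier (G \<times>\<times> K))"
  by (induction w) (auto simp: monoid.one_closed)


context
  fixes G :: "('a, 'b) monoid_scheme" and K :: "('c, 'd) monoid_scheme" and H :: "'a set"
  assumes G: "group G" and HG: "subgroup H G" and K: "group K"
begin

lemma mG: "monoid G" using G group.is_monoid by blast
lemma mK: "monoid K" using K group.is_monoid by blast
lemma mGK: "monoid (G \<times>\<times> K)" using DirProd_group[OF G K] group.is_monoid by blast
lemma Hsub: "H \<subseteq> carrier G" using HG subgroup.subset by blast
lemma HKsub: "H \<times> carrier K \<subseteq> carrier (G \<times>\<times> K)" using Hsub by auto

lemma proj_rel: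
  "amalg_rel (G \<times>\<times> K) (H \<times> carrier K) xs ys \<Longrightarrow>
     amalg_rel G H (pG xs) (pG ys) \<and> pK K xs = pK K ys"
proof (induction rule: amalg_rel.induct)
  case (refl xs)
  then show ?case using pG_lists amalg_rel.refl by blast
next
  case (sym xs ys)
  then show ?case using amalg_rel.sym by metis
next
  case (trans xs ys zs)
  then show ?case using amalg_rel.trans by metis
next
  case (append xs ys us vs)
  have l: "xs \<in> lists (UNIV \<times> carrier (G \<times>\<times> K))" "ys \<in> lists (UNIV \<times> carrier (G \<times>\<times> K))"
    "us \<in> lists (UNIV \<times> carrier (G \<times>\<times> K))" "vs \<in> lists (UNIV \<times> carrier (G \<times>\<times> K))"
    using rel_lists[OF mGK HKsub] append.hyps by blast+
  show ?case using append.IH amalg_rel.append pK_append[OF mK l(1,3)] pK_append[OF mK l(2,4)]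
    by (metis pG_simps(3))
next
  case (mult g h i)
  then show ?case using mK mG
    by (auto simp: mult_DirProd' monoid.r_one monoid.m_closed intro: amalg_rel.mult)
next
  case (one i)
  then show ?case using mK by (auto simp: monoid.r_one monoid.one_closed intro: amalg_rel.one)
next
  case (amalg h i j)
  then show ?case by (auto intro: amalg_rel.amalg)
qed

lemma lift_rel:
  "amalg_rel G H xs ys \<Longrightarrow> amalg_rel (G \<times>\<times> K) (H \<times> carrier K) (lift K xs) (lift K ys)"
proof (induction rule: amalg_rel.induct)
  case (refl xs)
  then show ?case using lift_lists[OF mK] amalg_rel.refl by blast
next
  case (sym xs ys)
  then show ?case using amalg_rel.sym by metis
next
  case (trans xs ys zs)
  then show ?case using amalg_rel.trans by metis
next
  case (append xs ys us vs)
  then show ?case using amalg_rel.append by (metis lift_simps(3))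
next
  case (mult g h i)
  have "amalg_rel (G \<times>\<times> K) (H \<times> carrier K) [(i, (g, \<one>\<^bsub>K\<^esub>)), (i, (h, \<one>\<^bsub>K\<^esub>))]
        [(i, (g, \<one>\<^bsub>K\<^esub>) \<otimes>\<^bsub>G \<times>\<times> K\<^esub> (h, \<one>\<^bsub>K\<^esub>))]"
    using mult mK by (intro amalg_rel.mult) (auto simp: monoid.one_closed)
  then show ?case using mK by (simp add: monoid.l_one monoid.one_closed)
next
  case (one i)
  then show ?case using amalg_rel.one[of "G \<times>\<times> K" "H \<times> carrier K" i] by simp
next
  case (amalg h i j)
  then show ?case using mK by (auto intro: amalg_rel.amalg simp: monoid.one_closed)
qed

abbreviation "R \<equiv> amalg_rel (G \<times>\<times> K) (H \<times> carrier K)"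

lemma Rrefl: "xs \<in> lists (UNIV \<times> carrier (G \<times>\<times> K)) \<Longrightarrow> R xs xs"
  by (rule amalg_rel.refl)

lemma swap1:
  assumes a: "a \<in> carrier G" and k: "k \<in> carrier K"
  shows "R [(0, (\<one>\<^bsub>G\<^esub>, k)), (j, (a, \<one>\<^bsub>K\<^esub>))] [(j, (a, \<one>\<^bsub>K\<^esub>)), (0, (\<one>\<^bsub>G\<^esub>, k))]"
proof -
  have o: "\<one>\<^bsub>G\<^esub> \<in> carrier G" "\<one>\<^bsub>K\<^esub> \<in> carrier K" "\<one>\<^bsub>G\<^esub> \<in> H"
    using mG mK HG by (auto simp: monoid.one_closed subgroup.one_closed)
  have am: "R [(0, (\<one>\<^bsub>G\<^esub>, k))] [(j, (\<one>\<^bsub>G\<^esub>, k))]"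
    using o k by (intro amalg_rel.amalg) auto
  have r1: "R [(j, (a, \<one>\<^bsub>K\<^esub>))] [(j, (a, \<one>\<^bsub>K\<^esub>))]"
    using a o by (intro Rrefl) auto
  have m1: "R [(j, (\<one>\<^bsub>G\<^esub>, k)), (j, (a, \<one>\<^bsub>K\<^esub>))] [(j, (\<one>\<^bsub>G\<^esub>, k) \<otimes>\<^bsub>G \<times>\<times> K\<^esub> (a, \<one>\<^bsub>K\<^esub>))]"
    using a k o by (intro amalg_rel.mult) auto
  have m2: "R [(j, (a, \<one>\<^bsub>K\<^esub>)), (j, (\<one>\<^bsub>G\<^esub>, k))] [(j, (a, \<one>\<^bsub>K\<^esub>) \<otimes>\<^bsub>G \<times>\<times> K\<^esub> (\<one>\<^bsub>G\<^esub>, k))]"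
    using a k o by (intro amalg_rel.mult) auto
  have e: "(\<one>\<^bsub>G\<^esub>, k) \<otimes>\<^bsub>G \<times>\<times> K\<^esub> (a, \<one>\<^bsub>K\<^esub>) = (a, \<one>\<^bsub>K\<^esub>) \<otimes>\<^bsub>G \<times>\<times> K\<^esub> (\<one>\<^bsub>G\<^esub>, k)"
    using a k mG mK by (simp add: monoid.l_one monoid.r_one)
  have s1: "R [(0, (\<one>\<^bsub>G\<^esub>, k)), (j, (a, \<one>\<^bsub>K\<^esub>))] [(j, (\<one>\<^bsub>G\<^esub>, k)), (j, (a, \<one>\<^bsub>K\<^esub>))]"
    using amalg_rel.append[OF am r1] by simp
  have s2: "R [(j, (a, \<one>\<^bsub>K\<^esub>)), (0, (\<one>\<^bsub>G\<^esub>, k))] [(j, (a, \<one>\<^bsub>K\<^esub>)), (j, (\<one>\<^bsub>G\<^esub>, k))]"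
    using amalg_rel.append[OF r1 am] by simp
  have "R [(0, (\<one>\<^bsub>G\<^esub>, k)), (j, (a, \<one>\<^bsub>K\<^esub>))] [(j, (a, \<one>\<^bsub>K\<^esub>) \<otimes>\<^bsub>G \<times>\<times> K\<^esub> (\<one>\<^bsub>G\<^esub>, k))]"
    using amalg_rel.trans[OF s1 m1] e by simp
  moreover have "R [(j, (a, \<one>\<^bsub>K\<^esub>) \<otimes>\<^bsub>G \<times>\<times> K\<^esub> (\<one>\<^bsub>G\<^esub>, k))] [(j, (a, \<one>\<^bsub>K\<^esub>)), (0, (\<one>\<^bsub>G\<^esub>, k))]"
    using amalg_rel.sym[OF amalg_rel.trans[OF s2 m2]] .
  ultimately show ?thesis by (rule amalg_rel.trans)
qed

lemma comm:
  assumes k: "k \<in> carrier K"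
  shows "u \<in> lists (UNIV \<times> carrier G) \<Longrightarrow>
    R ((0, (\<one>\<^bsub>G\<^esub>, k)) # lift K u) (lift K u @ [(0, (\<one>\<^bsub>G\<^esub>, k))])"
proof (induction u)
  case Nil
  then show ?case using k mG by (auto intro: Rrefl simp: monoid.one_closed)
next
  case (Cons x u)
  obtain j a where x: "x = (j, a)" by (cases x)
  have a: "a \<in> carrier G" "u \<in> lists (UNIV \<times> carrier G)" using Cons x by auto
  have lu: "lift K u \<in> lists (UNIV \<times> carrier (G \<times>\<times> K))" using lift_lists[OF mK a(2)] .
  have o: "\<one>\<^bsub>K\<^esub> \<in> carrier K" using mK by (simp add: monoid.one_closed)
  have t1: "R ([(0, (\<one>\<^bsub>G\<^esub>, k)), (j, (a, \<one>\<^bsub>K\<^esub>))] @ lift K u) ([(j, (a, \<one>\<^bsub>K\<^esub>)), (0, (\<one>\<^bsub>G\<^esub>, k))] @ lift K u)"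
    using amalg_rel.append[OF swap1[OF a(1) k] Rrefl[OF lu]] .
  have t2: "R ([(j, (a, \<one>\<^bsub>K\<^esub>))] @ ((0, (\<one>\<^bsub>G\<^esub>, k)) # lift K u)) ([(j, (a, \<one>\<^bsub>K\<^esub>))] @ (lift K u @ [(0, (\<one>\<^bsub>G\<^esub>, k))]))"
  proof -
    have "[(j, (a, \<one>\<^bsub>K\<^esub>))] \<in> lists (UNIV \<times> carrier (G \<times>\<times> K))" using a o by auto
    from amalg_rel.append[OF Rrefl[OF this] Cons.IH[OF a(2)]] show ?thesis .
  qed
  have t2': "R ((j, (a, \<one>\<^bsub>K\<^esub>)) # (0, (\<one>\<^bsub>G\<^esub>, k)) # lift K u) ((j, (a, \<one>\<^bsub>K\<^esub>)) # lift K u @ [(0, (\<one>\<^bsub>G\<^esub>, k))])"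
    using t2 by simp
  have t1': "R ((0, (\<one>\<^bsub>G\<^esub>, k)) # (j, (a, \<one>\<^bsub>K\<^esub>)) # lift K u) ((j, (a, \<one>\<^bsub>K\<^esub>)) # (0, (\<one>\<^bsub>G\<^esub>, k)) # lift K u)"
    using t1 by simp
  show ?case using amalg_rel.trans[OF t1' t2'] x by simp
qed

lemma normal:
  "w \<in> lists (UNIV \<times> carrier (G \<times>\<times> K)) \<Longrightarrow>
    R w (lift K (pG w) @ [(0, (\<one>\<^bsub>G\<^esub>, pK K w))])"
proof (induction w)
  case Nil
  have "R [(0, \<one>\<^bsub>G \<times>\<times> K\<^esub>)] []" by (rule amalg_rel.one)
  then show ?case using amalg_rel.sym by fastforce
next
  case (Cons x w)
  obtain i g k where x: "x = (i, (g, k))" by (cases x) auto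
  have gk: "g \<in> carrier G" "k \<in> carrier K" "w \<in> lists (UNIV \<times> carrier (G \<times>\<times> K))" using Cons x by auto
  define p where "p = pK K w"
  define L where "L = lift K (pG w)"
  have p: "p \<in> carrier K" using pK_carrier[OF mK gk(3)] p_def by simp
  have L: "L \<in> lists (UNIV \<times> carrier (G \<times>\<times> K))" unfolding L_def
    using lift_lists[OF mK pG_lists[OF gk(3)]] .
  have o: "\<one>\<^bsub>G\<^esub> \<in> carrier G" "\<one>\<^bsub>K\<^esub> \<in> carrier K" "\<one>\<^bsub>G\<^esub> \<in> H"
    using mG mK HG by (auto simp: monoid.one_closed subgroup.one_closed)
  have m1: "R [(i, (g, \<one>\<^bsub>K\<^esub>)), (i, (\<one>\<^bsub>G\<^esub>, k))] [(i, (g, \<one>\<^bsub>K\<^esub>) \<otimes>\<^bsub>G \<times>\<times> K\<^esub> (\<one>\<^bsub>G\<^esub>, k))]"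
    using gk o by (intro amalg_rel.mult) auto
  hence m1': "R [(i, (g, \<one>\<^bsub>K\<^esub>)), (i, (\<one>\<^bsub>G\<^esub>, k))] [(i, (g, k))]"
    using gk mG mK by (simp add: monoid.l_one monoid.r_one)
  have am: "R [(i, (\<one>\<^bsub>G\<^esub>, k))] [(0, (\<one>\<^bsub>G\<^esub>, k))]"
    using o gk by (intro amalg_rel.amalg) auto
  have s1a: "R [(i, (g, \<one>\<^bsub>K\<^esub>)), (i, (\<one>\<^bsub>G\<^esub>, k))] [(i, (g, \<one>\<^bsub>K\<^esub>)), (0, (\<one>\<^bsub>G\<^esub>, k))]"
    using amalg_rel.append[OF Rrefl am, of "[(i, (g, \<one>\<^bsub>K\<^esub>))]"] gk o by auto
  have s1: "R [(i, (g, k))] [(i, (g, \<one>\<^bsub>K\<^esub>)), (0, (\<one>\<^bsub>G\<^esub>, k))]"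
    using amalg_rel.trans[OF amalg_rel.sym[OF m1'] s1a] .
  have s2: "R ([(i, (g, k))] @ w) ([(i, (g, \<one>\<^bsub>K\<^esub>)), (0, (\<one>\<^bsub>G\<^esub>, k))] @ (L @ [(0, (\<one>\<^bsub>G\<^esub>, p))]))"
    using amalg_rel.append[OF s1 Cons.IH[OF gk(3)]] unfolding L_def p_def .
  have c: "R ((0, (\<one>\<^bsub>G\<^esub>, k)) # L) (L @ [(0, (\<one>\<^bsub>G\<^esub>, k))])"
    unfolding L_def using comm[OF gk(2) pG_lists[OF gk(3)]] .
  have last1: "R [(0, (\<one>\<^bsub>G\<^esub>, p))] [(0, (\<one>\<^bsub>G\<^esub>, p))]"
    using o p by (intro Rrefl) auto
  have s3: "R (((0, (\<one>\<^bsub>G\<^esub>, k)) # L) @ [(0, (\<one>\<^bsub>G\<^esub>, p))]) ((L @ [(0, (\<one>\<^bsub>G\<^esub>, k))]) @ [(0, (\<one>\<^bsub>G\<^esub>, p))])"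
    using amalg_rel.append[OF c last1] .
  have m2: "R [(0, (\<one>\<^bsub>G\<^esub>, k)), (0, (\<one>\<^bsub>G\<^esub>, p))] [(0, (\<one>\<^bsub>G\<^esub>, k) \<otimes>\<^bsub>G \<times>\<times> K\<^esub> (\<one>\<^bsub>G\<^esub>, p))]"
    using gk o p by (intro amalg_rel.mult) auto
  hence m2': "R [(0, (\<one>\<^bsub>G\<^esub>, k)), (0, (\<one>\<^bsub>G\<^esub>, p))] [(0, (\<one>\<^bsub>G\<^esub>, k \<otimes>\<^bsub>K\<^esub> p))]"
    using mG by (simp add: monoid.l_one monoid.one_closed)
  have s4: "R (L @ [(0, (\<one>\<^bsub>G\<^esub>, k)), (0, (\<one>\<^bsub>G\<^esub>, p))]) (L @ [(0, (\<one>\<^bsub>G\<^esub>, k \<otimes>\<^bsub>K\<^esub> p))])"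
    using amalg_rel.append[OF Rrefl[OF L] m2'] .
  have s34: "R (((0, (\<one>\<^bsub>G\<^esub>, k)) # L) @ [(0, (\<one>\<^bsub>G\<^esub>, p))]) (L @ [(0, (\<one>\<^bsub>G\<^esub>, k \<otimes>\<^bsub>K\<^esub> p))])"
    using amalg_rel.trans[OF s3] s4 by (simp del: amalg_rel.trans)
  have r0: "R [(i, (g, \<one>\<^bsub>K\<^esub>))] [(i, (g, \<one>\<^bsub>K\<^esub>))]" using gk o by (intro Rrefl) auto
  have s5: "R ([(i, (g, \<one>\<^bsub>K\<^esub>))] @ (((0, (\<one>\<^bsub>G\<^esub>, k)) # L) @ [(0, (\<one>\<^bsub>G\<^esub>, p))]))
      ([(i, (g, \<one>\<^bsub>K\<^esub>))] @ (L @ [(0, (\<one>\<^bsub>G\<^esub>, k \<otimes>\<^bsub>K\<^esub> p))]))"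
    using amalg_rel.append[OF r0 s34] .
  have "R ([(i, (g, k))] @ w) ([(i, (g, \<one>\<^bsub>K\<^esub>))] @ (L @ [(0, (\<one>\<^bsub>G\<^esub>, k \<otimes>\<^bsub>K\<^esub> p))]))"
    using amalg_rel.trans[OF s2] s5 by (simp del: amalg_rel.trans)
  then show ?case using x L_def p_def by simp
qed

definition F :: "(nat \<times> ('a \<times> 'c)) list set \<Rightarrow> (nat \<times> 'a) list set \<times> 'c" where
  "F A = (let w = (SOME w. w \<in> A) in (amalg_class G H (pG w), pK K w))"

lemma F_class:
  assumes xs: "xs \<in> lists (UNIV \<times> carrier (G \<times>\<times> K))"
  shows "F (amalg_class (G \<times>\<times> K) (H \<times> carrier K) xs) = (amalg_class G H (pG xs), pK K xs)"
proof -
  define A where "A = amalg_class (G \<times>\<times> K) (H \<times> carrier K) xs"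
  have "xs \<in> A" using xs by (simp add: A_def amalg_class_def Rrefl)
  hence "(SOME w. w \<in> A) \<in> A" by (rule someI)
  then obtain w where w: "w = (SOME w. w \<in> A)" "R xs w" by (simp add: A_def amalg_class_def)
  have wl: "w \<in> lists (UNIV \<times> carrier (G \<times>\<times> K))" using rel_lists[OF mGK HKsub w(2)] by blast
  have pr: "amalg_rel G H (pG xs) (pG w)" "pK K xs = pK K w" using proj_rel[OF w(2)] by auto
  have "amalg_class G H (pG xs) = amalg_class G H (pG w)"
    using class_eq[OF mG Hsub pG_lists[OF wl]] pr(1) by blast
  then show ?thesis unfolding A_def[symmetric] F_def Let_def w(1)[symmetric] using pr(2) by simp
qed

lemma carrier_amalg: "carrier (amalg_prod G' H') = amalg_class G' H' ` lists (UNIV \<times> carrier G')"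
  by (simp add: amalg_prod_def)

lemma main:
  "F \<in> hom (amalg_prod (G \<times>\<times> K) (H \<times> carrier K)) (amalg_prod G H \<times>\<times> K)
   \<and> inj_on F (carrier (amalg_prod (G \<times>\<times> K) (H \<times> carrier K)))"
proof (intro conjI)
  show "F \<in> hom (amalg_prod (G \<times>\<times> K) (H \<times> carrier K)) (amalg_prod G H \<times>\<times> K)"
  proof (rule homI)
    fix A assume "A \<in> carrier (amalg_prod (G \<times>\<times> K) (H \<times> carrier K))"
    then obtain xs where xs: "xs \<in> lists (UNIV \<times> carrier (G \<times>\<times> K))" "A = amalg_class (G \<times>\<times> K) (H \<times> carrier K) xs"
      by (auto simp: carrier_amalg)
    show "F A \<in> carrier (amalg_prod G H \<times>\<times> K)"
      using xs F_class pG_lists[OF xs(1)] pK_carrier[OF mK xs(1)] by (simp add: carrier_amalg)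
  next
    fix A B assume "A \<in> carrier (amalg_prod (G \<times>\<times> K) (H \<times> carrier K))"
      "B \<in> carrier (amalg_prod (G \<times>\<times> K) (H \<times> carrier K))"
    then obtain xs ys where xs: "xs \<in> lists (UNIV \<times> carrier (G \<times>\<times> K))" "A = amalg_class (G \<times>\<times> K) (H \<times> carrier K) xs"
      and ys: "ys \<in> lists (UNIV \<times> carrier (G \<times>\<times> K))" "B = amalg_class (G \<times>\<times> K) (H \<times> carrier K) ys"
      by (auto simp: carrier_amalg)
    have "A \<otimes>\<^bsub>amalg_prod (G \<times>\<times> K) (H \<times> carrier K)\<^esub> B = amalg_class (G \<times>\<times> K) (H \<times> carrier K) (xs @ ys)"
      using class_mult[OF xs(1) ys(1)] xs(2) ys(2) by simp
    moreover have "xs @ ys \<in> lists (UNIV \<times> carrier (G \<times>\<times> K))" using xs ys by simp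
    ultimately have "F (A \<otimes>\<^bsub>amalg_prod (G \<times>\<times> K) (H \<times> carrier K)\<^esub> B)
        = (amalg_class G H (pG xs @ pG ys), pK K xs \<otimes>\<^bsub>K\<^esub> pK K ys)"
      using F_class pK_append[OF mK xs(1) ys(1)] by simp
    also have "\<dots> = (amalg_class G H (pG xs), pK K xs) \<otimes>\<^bsub>amalg_prod G H \<times>\<times> K\<^esub> (amalg_class G H (pG ys), pK K ys)"
      using class_mult[OF pG_lists[OF xs(1)] pG_lists[OF ys(1)]] by simp
    also have "\<dots> = F A \<otimes>\<^bsub>amalg_prod G H \<times>\<times> K\<^esub> F B"
      using F_class xs ys by simp
    finally show "F (A \<otimes>\<^bsub>amalg_prod (G \<times>\<times> K) (H \<times> carrier K)\<^esub> B) = F A \<otimes>\<^bsub>amalg_prod G H \<times>\<times> K\<^esub> F B" .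
  qed
next
  show "inj_on F (carrier (amalg_prod (G \<times>\<times> K) (H \<times> carrier K)))"
  proof (rule inj_onI)
    fix A B assume "A \<in> carrier (amalg_prod (G \<times>\<times> K) (H \<times> carrier K))"
      "B \<in> carrier (amalg_prod (G \<times>\<times> K) (H \<times> carrier K))" and eq: "F A = F B"
    then obtain xs ys where xs: "xs \<in> lists (UNIV \<times> carrier (G \<times>\<times> K))" "A = amalg_class (G \<times>\<times> K) (H \<times> carrier K) xs"
      and ys: "ys \<in> lists (UNIV \<times> carrier (G \<times>\<times> K))" "B = amalg_class (G \<times>\<times> K) (H \<times> carrier K) ys"
      by (auto simp: carrier_amalg)
    have e1: "amalg_class G H (pG xs) = amalg_class G H (pG ys)" and e2: "pK K xs = pK K ys"
      using eq F_class xs ys by auto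
    have r: "amalg_rel G H (pG xs) (pG ys)" using class_eq[OF mG Hsub pG_lists[OF ys(1)]] e1 by blast
    have o: "[(0, (\<one>\<^bsub>G\<^esub>, pK K ys))] \<in> lists (UNIV \<times> carrier (G \<times>\<times> K))"
      using mG pK_carrier[OF mK ys(1)] by (simp add: monoid.one_closed)
    have "R (lift K (pG xs) @ [(0, (\<one>\<^bsub>G\<^esub>, pK K ys))]) (lift K (pG ys) @ [(0, (\<one>\<^bsub>G\<^esub>, pK K ys))])"
      using amalg_rel.append[OF lift_rel[OF r] Rrefl[OF o]] .
    hence "R xs ys"
      using amalg_rel.trans[OF amalg_rel.trans[OF normal[OF xs(1)]] amalg_rel.sym[OF normal[OF ys(1)]]] e2
      by simp
    then show "A = B" using xs(2) ys(2) class_eq[OF mGK HKsub ys(1)] by simp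
  qed
qed

end

theorem lemma2p4:
  fixes G :: "('a, 'b) monoid_scheme" and K :: "('c, 'd) monoid_scheme" and H :: "'a set"
  assumes "group G" and "subgroup H G" and "group K"
  shows "\<exists>f. f \<in> hom (amalg_prod (G \<times>\<times> K) (H \<times> carrier K)) (amalg_prod G H \<times>\<times> K)
             \<and> inj_on f (carrier (amalg_prod (G \<times>\<times> K) (H \<times> carrier K)))"
  using main[OF assms] by blast

end
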